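(* Let $\mathcal{I}$ be a finite set of closed intervals whose start- and endpoints are pairwise distinct, let $k\ge1$, and let $X$ and $\mathcal{S}$ be produced by the construction described in the context. Then every element of $X$ occurs in at most two constraints of $\mathcal{S}$, and $\mathcal{S}$ can be partitioned into two classes such that every element of $X$ occurring in two constraints occurs in one constraint of each class. Consequently, the multigraph with vertex set $\mathcal{S}$ and one edge $\{S,S'\}$ for each element of $X$ lying in the two constraints $S\neq S'$ is bipartite, and its proper edge colorings with $k$ colors correspond to colorings of $X$ in which the elements of each constraint receive pairwise distinct colors.
   Context: Construction. The events are the start- and endpoints of the intervals, scanned in increasing order. We maintain a list of active events (initially empty), a growing ground set $X$ (initially $\mathcal{I}$) and a family $\mathcal{S}$ of constraints (tuples of elements of $X$, initially empty). Whenever the active list is empty, the type of the next event (start or end) fixes the type of the current phase. Start phase: startpoints are appended to the active list. (a) If the active list contains startpoints of $k$ elements $I_1,\dots,I_k$ (actual intervals or virtual elements), add the constraint $(I_1,\dots,I_k)$ and clear the active list. (b) If the active list contains startpoints of $I_1,\dots,I_j$ with $j<k$ and the next event is the endpoint of some interval $I_{j+1}$, create new virtual elements $x_{j+1},\dots,x_k,y_1,\dots,y_{j-1}$ (added to $X$, not used before), add the constraints $(I_1,\dots,I_j,x_{j+1},\dots,x_k)$ and $(y_1,\dots,y_{j-1},I_{j+1},x_{j+1},\dots,x_k)$, and replace the active list by the (virtual) startpoints of $y_1,\dots,y_{j-1}$ (phase remains a start phase; if $j=1$ the list becomes empty). End phase: symmetric, with the roles of start- and endpoints interchanged. A proper edge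 coloring of a multigraph with $k$ colors assigns colors in $\{1,\dots,k\}$ to edges so that any two distinct edges sharing an endpoint get distinct colors. *)

theory Defs
  imports Complex_Main
begin

text \<open>An interval is a pair (a,b) of reals, denoting the closed interval {a..b}.\<close>
type_synonym interval = "real \<times> real"

datatype event = StartEv interval | EndEv interval

fun ev_pos :: "event \<Rightarrow> real" where
  "ev_pos (StartEv I) = fst I"
| "ev_pos (EndEv I) = snd I"

fun ev_is_start :: "event \<Rightarrow> bool" where
  "ev_is_start (StartEv I) = True"
| "ev_is_start (EndEv I) = False"

fun ev_interval :: "event \<Rightarrow> interval" where
  "ev_interval (StartEv I) = I"
| "ev_interval (EndEv I) = I"

definition events :: "interval set \<Rightarrow> event set" where
  "events \<I> = StartEv ` \<I> \<union> EndEv ` \<I>"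

definition valid_intervals :: "interval set \<Rightarrow> bool" where
  "valid_intervals \<I> \<longleftrightarrow> finite \<I> \<and> (\<forall>I\<in>\<I>. fst I \<le> snd I) \<and> inj_on ev_pos (events \<I>)"

definition sorted_events :: "interval set \<Rightarrow> event list" where
  "sorted_events \<I> = sorted_key_list_of_set ev_pos (events \<I>)"

text \<open>Elements of the ground set: actual intervals or virtual elements (fresh names).\<close>
datatype elem = Real interval | Virt nat

text \<open>State of the construction:
  (phase (True = start phase, False = end phase), active list,
   number of virtual elements created so far, list of constraints created so far).
  The family of constraints is a list (indexed by position), since the same tuple
  may arise as two different constraints.\<close>
type_synonym cstate = "bool \<times> elem list \<times> nat \<times> elem list list"

definition cstep :: "nat \<Rightarrow> cstate \<Rightarrow> event \<Rightarrow> cstate" where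
  "cstep k st e =
    (case st of (ph0, act, n, C) \<Rightarrow>
      let ph = (if act = [] then ev_is_start e else ph0) in
      if ev_is_start e = ph then
        (let act' = act @ [Real (ev_interval e)] in
         if length act' = k then (ph, [], n, C @ [act']) else (ph, act', n, C))
      else
        (let j = length act;
             xs = map Virt [n ..< n + (k - j)];
             ys = map Virt [n + (k - j) ..< n + (k - j) + (j - 1)]
         in (ph, ys, n + (k - j) + (j - 1),
             C @ [act @ xs, ys @ [Real (ev_interval e)] @ xs])))"

definition construction :: "nat \<Rightarrow> interval set \<Rightarrow> cstate" where
  "construction k \<I> = fold (\<lambda>e st. cstep k st e) (sorted_events \<I>) (True, [], 0, [])"

definition ground_set :: "nat \<Rightarrow> interval set \<Rightarrow> elem set" where
  "ground_set k \<I> = Real ` \<I> \<union> Virt ` {..< fst (snd (snd (construction k \<I>)))}"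

definition constraints :: "nat \<Rightarrow> interval set \<Rightarrow> elem list list" where
  "constraints k \<I> = snd (snd (snd (construction k \<I>)))"

definition occ :: "elem list list \<Rightarrow> elem \<Rightarrow> nat set" where
  "occ S x = {c. c < length S \<and> x \<in> set (S ! c)}"

text \<open>The multigraph with vertex set S (indices {0..<length S}) and one edge for each
  element x of X lying in two distinct constraints; the ends of edge x are occ S x.\<close>
definition mg_edges :: "elem set \<Rightarrow> elem list list \<Rightarrow> elem set" where
  "mg_edges X S = {x \<in> X. card (occ S x) = 2}"

definition mg_bipartite :: "elem set \<Rightarrow> elem list list \<Rightarrow> bool" where
  "mg_bipartite X S \<longleftrightarrow> (\<exists>A \<subseteq> {..<length S}. \<forall>x \<in> mg_edges X S. card (occ S x \<inter> A) = 1)"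

definition proper_edge_coloring :: "nat \<Rightarrow> elem set \<Rightarrow> elem list list \<Rightarrow> (elem \<Rightarrow> nat) \<Rightarrow> bool" where
  "proper_edge_coloring k X S g \<longleftrightarrow>
     (\<forall>x \<in> mg_edges X S. g x \<in> {1..k}) \<and>
     (\<forall>x \<in> mg_edges X S. \<forall>y \<in> mg_edges X S. x \<noteq> y \<and> occ S x \<inter> occ S y \<noteq> {} \<longrightarrow> g x \<noteq> g y)"

definition constraint_coloring :: "nat \<Rightarrow> elem set \<Rightarrow> elem list list \<Rightarrow> (elem \<Rightarrow> nat) \<Rightarrow> bool" where
  "constraint_coloring k X S f \<longleftrightarrow>
     (\<forall>x \<in> X. f x \<in> {1..k}) \<and> (\<forall>c < length S. distinct (map f (S ! c)))"

end

theory Submission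
  imports Defs
begin


lemma skl_eq: "linorder.sorted_key_list_of_set ((\<le>) :: real \<Rightarrow> real \<Rightarrow> bool) ev_pos = sorted_key_list_of_set ev_pos"
  by (simp add: sorted_key_list_of_set_def linorder.sorted_key_list_of_set_def[OF linorder_class.linorder_axioms] insort_key_def linorder.insort_key_def[OF linorder_class.linorder_axioms])

lemma sorted_events_props:
  assumes "valid_intervals \<I>"
  shows "distinct (sorted_events \<I>) \<and> set (sorted_events \<I>) = events \<I>"
proof -
  have fin: "finite (events \<I>)" using assms by (simp add: valid_intervals_def events_def)
  have inj: "inj_on ev_pos (events \<I>)" using assms by (simp add: valid_intervals_def)
  have L: "folding_insort_key ((\<le>) :: real \<Rightarrow> real \<Rightarrow> bool) (<) (events \<I>) ev_pos"
    by unfold_locales (rule inj)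
  have 1: "distinct (map ev_pos (sorted_key_list_of_set ev_pos (events \<I>)))"
    using folding_insort_key.distinct_sorted_key_list_of_set[OF L, of "events \<I>"] by (simp add: skl_eq)
  have 2: "set (sorted_key_list_of_set ev_pos (events \<I>)) = events \<I>"
    using folding_insort_key.set_sorted_key_list_of_set[OF L, of "events \<I>"] fin by (simp add: skl_eq)
  show ?thesis unfolding sorted_events_def
    using 1 2 by (simp add: distinct_map)
qed



definition evt :: "bool \<Rightarrow> interval \<Rightarrow> event" where
  "evt t I = (if t then StartEv I else EndEv I)"

lemma evt_inj[simp]: "evt t I = evt t' J \<longleftrightarrow> t = t' \<and> I = J"
  by (auto simp: evt_def)

lemma e_evt: "e = evt (ev_is_start e) (ev_interval e)"
  by (cases e) (auto simp: evt_def)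

definition rem :: "event set \<Rightarrow> nat \<Rightarrow> elem \<Rightarrow> bool set" where
  "rem U n x = (case x of Real I \<Rightarrow> {t. evt t I \<in> U} | Virt m \<Rightarrow> if n \<le> m then UNIV else {})"

definition goodx :: "bool \<Rightarrow> elem list \<Rightarrow> elem list list \<Rightarrow> (nat \<Rightarrow> bool) \<Rightarrow> bool set \<Rightarrow> elem \<Rightarrow> bool" where
  "goodx ph act C cls r x \<longleftrightarrow>
     (x \<in> set act \<longrightarrow> (occ C x = {} \<and> r = {\<not>ph}) \<or> (\<exists>c. occ C x = {c} \<and> cls c \<noteq> ph \<and> r = {})) \<and>
     (x \<notin> set act \<longrightarrow> (occ C x = {} \<and> r = UNIV) \<or> (\<exists>c. occ C x = {c} \<and> r = {\<not> cls c})
        \<or> (\<exists>c1 c2. occ C x = {c1,c2} \<and> cls c1 \<noteq> cls c2 \<and> r = {}) \<or> (occ C x = {} \<and> r = {}))"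

definition Inv :: "interval set \<Rightarrow> nat \<Rightarrow> event set \<Rightarrow> cstate \<Rightarrow> (nat \<Rightarrow> bool) \<Rightarrow> bool" where
  "Inv \<I> k U st cls \<longleftrightarrow> (case st of (ph, act, n, C) \<Rightarrow>
     U \<subseteq> events \<I> \<and> (\<forall>c<length C. length (C!c) = k \<and> distinct (C!c)) \<and> length act < k \<and> distinct act \<and>
     (\<forall>I. I \<notin> \<I> \<longrightarrow> Real I \<notin> set act \<and> occ C (Real I) = {}) \<and>
     (\<forall>x. goodx ph act C cls (rem U n x) x))"

lemma occ_bound: "occ C x \<subseteq> {..<length C}"
  by (auto simp: occ_def)

lemma occ_app1: "occ (C @ [a]) x = (if x \<in> set a then insert (length C) (occ C x) else occ C x)"
  by (auto simp: occ_def nth_append less_Suc_eq)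

lemma occ_app2: "occ (C @ [a, b]) x = (if x \<in> set a then {length C} else {}) \<union> (if x \<in> set b then {Suc (length C)} else {}) \<union> occ C x"
  by (auto simp: occ_def nth_append less_Suc_eq)

lemma occ_Nil[simp]: "occ [] x = {}" by (simp add: occ_def)

lemma goodx_out:
  assumes "goodx ph act C cls r x" "x \<notin> set act" "x \<notin> set act'" "occ C' x = occ C x"
    "\<forall>c\<in>occ C x. cls' c = cls c"
  shows "goodx ph' act' C' cls' r x"
  using assms unfolding goodx_def by auto

lemma rem_remove: "e \<in> U \<Longrightarrow> rem (U - {e}) n x = rem U n x - (if x = Real (ev_interval e) then {ev_is_start e} else {})"
  apply (subst (1) e_evt[of e])
  apply (auto simp: rem_def split: elem.splits)
  done

lemma Inv_init: "k \<ge> 1 \<Longrightarrow> Inv \<I> k (events \<I>) (True, [], 0, []) cls"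
  unfolding Inv_def goodx_def rem_def
  by (auto simp: events_def evt_def split: elem.splits)


lemma goodx_in_cases:
  assumes "goodx ph act C cls r x" "x \<in> set act"
  obtains "occ C x = {}" "r = {\<not>ph}" | c where "occ C x = {c}" "cls c \<noteq> ph" "r = {}"
  using assms unfolding goodx_def by blast

lemma goodx_out_cases:
  assumes "goodx ph act C cls r x" "x \<notin> set act"
  obtains "occ C x = {}" "r = UNIV" | c where "occ C x = {c}" "r = {\<not> cls c}"
   | c1 c2 where "occ C x = {c1,c2}" "cls c1 \<noteq> cls c2" "r = {}" | "occ C x = {}" "r = {}"
  using assms unfolding goodx_def by blast

lemma goodx_I_in0: "x \<in> set act \<Longrightarrow> occ C x = {} \<Longrightarrow> r = {\<not>ph} \<Longrightarrow> goodx ph act C cls r x"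
  unfolding goodx_def by blast
lemma goodx_I_in1: "x \<in> set act \<Longrightarrow> occ C x = {c} \<Longrightarrow> cls c \<noteq> ph \<Longrightarrow> r = {} \<Longrightarrow> goodx ph act C cls r x"
  unfolding goodx_def by blast
lemma goodx_I_out0: "x \<notin> set act \<Longrightarrow> occ C x = {} \<Longrightarrow> r = UNIV \<Longrightarrow> goodx ph act C cls r x"
  unfolding goodx_def by blast
lemma goodx_I_out1: "x \<notin> set act \<Longrightarrow> occ C x = {c} \<Longrightarrow> r = {\<not> cls c} \<Longrightarrow> goodx ph act C cls r x"
  unfolding goodx_def by blast
lemma goodx_I_out2: "x \<notin> set act \<Longrightarrow> occ C x = {ca,cb} \<Longrightarrow> cls ca \<noteq> cls cb \<Longrightarrow> r = {} \<Longrightarrow> goodx ph act C cls r x"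
  unfolding goodx_def by blast

lemma bool_UNIV_minus: "UNIV - {t::bool} = {\<not> t}" by auto
lemma bool_single_minus: "t \<in> {s::bool} \<Longrightarrow> {s} - {t} = {}" by auto



locale stepc =
  fixes \<I> :: "interval set" and k :: nat and U :: "event set" and ph0 :: bool and act :: "elem list"
    and n :: nat and C :: "elem list list" and cls :: "nat \<Rightarrow> bool" and e :: event
  assumes inv: "Inv \<I> k U (ph0, act, n, C) cls" and eU: "e \<in> U"
begin

abbreviation "t \<equiv> ev_is_start e"
abbreviation "I \<equiv> ev_interval e"
abbreviation "ph \<equiv> (if act = [] then t else ph0)"
abbreviation "L \<equiv> length C"

lemma Usub: "U \<subseteq> events \<I>" using inv by (simp add: Inv_def)
lemma clen: "\<forall>c<length C. length (C!c) = k \<and> distinct (C!c)" using inv by (simp add: Inv_def)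
lemma actlen: "length act < k" using inv by (simp add: Inv_def)
lemma actdist: "distinct act" using inv by (simp add: Inv_def)
lemma notI: "\<forall>J. J \<notin> \<I> \<longrightarrow> Real J \<notin> set act \<and> occ C (Real J) = {}" using inv by (simp add: Inv_def)
lemma good0: "goodx ph0 act C cls (rem U n x) x" using inv by (simp add: Inv_def)
lemma good: "goodx ph act C cls (rem U n x) x"
  using good0[of x] by (cases "act = []") (auto simp: goodx_def)

lemma Iin: "I \<in> \<I>"
  using Usub eU by (cases e) (auto simp: events_def)
lemma tin: "t \<in> rem U n (Real I)"
  using eU e_evt[of e] by (simp add: rem_def)
lemma rem': "rem (U - {e}) n x = rem U n x - (if x = Real I then {t} else {})"
  by (rule rem_remove[OF eU])

lemma occ_lt: "c \<in> occ C x \<Longrightarrow> c < L"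
  using occ_bound by blast

lemma RI_notin: "t = ph \<Longrightarrow> Real I \<notin> set act"
  using good[of "Real I"] tin unfolding goodx_def by auto

lemma A1:
  assumes tph: "t = ph" and len: "length act + 1 = k"
  shows "Inv \<I> k (U - {e}) (ph, [], n, C @ [act @ [Real I]]) (cls(L := ph))"
proof -
  let ?C' = "C @ [act @ [Real I]]" and ?cls = "cls(L := ph)"
  have gx: "goodx ph [] ?C' ?cls (rem (U - {e}) n x) x" for x
  proof (cases "x = Real I")
    case True
    have ni: "x \<notin> set act" using RI_notin[OF tph] True by simp
    have ti: "t \<in> rem U n x" using tin True by simp
    have o: "occ ?C' x = insert L (occ C x)" using True by (simp add: occ_app1)
    have r: "rem (U - {e}) n x = rem U n x - {t}" using True rem' by simp
    show ?thesis
    proof (rule goodx_out_cases[OF good ni])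
      assume a: "occ C x = {}" "rem U n x = UNIV"
      show ?thesis
        by (rule goodx_I_out1[where c=L]) (use a o r tph in \<open>simp_all add: bool_UNIV_minus\<close>)
    next
      fix c assume a: "occ C x = {c}" "rem U n x = {\<not> cls c}"
      have "c < L" using a occ_lt by blast
      have cc: "cls c = (\<not> t)" using a ti by simp
      show ?thesis
        by (rule goodx_I_out2[where ca=c and cb=L]) (use a o r tph ti cc \<open>c < L\<close> in \<open>simp_all add: insert_commute\<close>)
    next
      fix c1 c2 assume "rem U n x = {}" with ti show ?thesis by simp
    next
      assume "rem U n x = {}" "occ C x = {}" with ti show ?thesis by simp
    qed
  next
    case False
    note F = False
    show ?thesis
    proof (cases "x \<in> set act")
      case True
      have o: "occ ?C' x = insert L (occ C x)" using True by (simp add: occ_app1)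
      have r: "rem (U - {e}) n x = rem U n x" using F rem' by simp
      show ?thesis
      proof (rule goodx_in_cases[OF good True])
        assume a: "occ C x = {}" "rem U n x = {\<not>ph}"
        show ?thesis
          by (rule goodx_I_out1[where c=L]) (use a o r in simp_all)
      next
        fix c assume a: "occ C x = {c}" "cls c \<noteq> ph" "rem U n x = {}"
        have "c < L" using a occ_lt by blast
        show ?thesis
          by (rule goodx_I_out2[where ca=c and cb=L]) (use a o r \<open>c < L\<close> in \<open>simp_all add: insert_commute\<close>)
      qed
    next
      case False
      have o: "occ ?C' x = occ C x" using False F by (simp add: occ_app1)
      have r: "rem (U - {e}) n x = rem U n x" using F rem' by simp
      show ?thesis unfolding r
        by (rule goodx_out[OF good False _ o]) (auto dest: occ_lt)
    qed
  qed
  have dist': "distinct (act @ [Real I])" using actdist RI_notin[OF tph] by simp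
  have c': "\<forall>c<length ?C'. length (?C'!c) = k \<and> distinct (?C'!c)"
    using clen len dist' by (auto simp: nth_append less_Suc_eq)
  have n': "\<forall>J. J \<notin> \<I> \<longrightarrow> Real J \<notin> set [] \<and> occ ?C' (Real J) = {}"
    using notI Iin by (auto simp: occ_app1)
  show ?thesis unfolding Inv_def
    using Usub len c' n' gx by auto
qed

lemma fresh: "n \<le> m \<Longrightarrow> occ C (Virt m) = {} \<and> Virt m \<notin> set act"
proof -
  assume nm: "n \<le> m"
  have r: "rem U n (Virt m) = UNIV" using nm by (simp add: rem_def)
  show ?thesis
  proof (cases "Virt m \<in> set act")
    case True
    show ?thesis by (rule goodx_in_cases[OF good True]) (use r in auto)
  next
    case False
    show ?thesis by (rule goodx_out_cases[OF good False]) (use r False in auto)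
  qed
qed

lemma A2:
  assumes tph: "t = ph" and len: "length act + 1 \<noteq> k"
  shows "Inv \<I> k (U - {e}) (ph, act @ [Real I], n, C) cls"
proof -
  let ?a = "act @ [Real I]"
  have gx: "goodx ph ?a C cls (rem (U - {e}) n x) x" for x
  proof (cases "x = Real I")
    case True
    have ni: "x \<notin> set act" using RI_notin[OF tph] True by simp
    have ti: "t \<in> rem U n x" using tin True by simp
    have r: "rem (U - {e}) n x = rem U n x - {t}" using True rem' by simp
    have xi: "x \<in> set ?a" using True by simp
    show ?thesis
    proof (rule goodx_out_cases[OF good ni])
      assume a: "occ C x = {}" "rem U n x = UNIV"
      show ?thesis
        by (rule goodx_I_in0[OF xi]) (use a r tph in \<open>simp_all add: bool_UNIV_minus\<close>)
    next
      fix c assume a: "occ C x = {c}" "rem U n x = {\<not> cls c}"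
      have cc: "cls c = (\<not> t)" using a ti by simp
      show ?thesis
        by (rule goodx_I_in1[OF xi, where c=c]) (use a r tph ti cc in simp_all)
    next
      fix c1 c2 assume "rem U n x = {}" with ti show ?thesis by simp
    next
      assume "rem U n x = {}" "occ C x = {}" with ti show ?thesis by simp
    qed
  next
    case False
    note F = False
    have r: "rem (U - {e}) n x = rem U n x" using F rem' by simp
    show ?thesis
    proof (cases "x \<in> set act")
      case True
      have xi: "x \<in> set ?a" using True by simp
      have ph: "ph = ph0" using True by auto
      show ?thesis
      proof (rule goodx_in_cases[OF good True])
        assume a: "occ C x = {}" "rem U n x = {\<not>ph}"
        show ?thesis by (rule goodx_I_in0[OF xi]) (use a r in simp_all)
      next
        fix c assume a: "occ C x = {c}" "cls c \<noteq> ph" "rem U n x = {}"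
        show ?thesis by (rule goodx_I_in1[OF xi, where c=c]) (use a r in simp_all)
      qed
    next
      case False
      have xa: "x \<notin> set ?a" using False F by simp
      show ?thesis unfolding r
        by (rule goodx_out[OF good False xa]) auto
    qed
  qed
  have dist': "distinct ?a" using actdist RI_notin[OF tph] by simp
  have len': "length ?a < k" using actlen len by simp
  have n': "\<forall>J. J \<notin> \<I> \<longrightarrow> Real J \<notin> set ?a \<and> occ C (Real J) = {}"
    using notI Iin by auto
  show ?thesis unfolding Inv_def
    using Usub clen len' dist' n' gx by auto
qed

lemma B:
  assumes tph: "t \<noteq> ph"
  defines "j \<equiv> length act"
  defines "xs \<equiv> map Virt [n ..< n + (k - j)]"
  defines "ys \<equiv> map Virt [n + (k - j) ..< n + (k - j) + (j - 1)]"
  defines "n' \<equiv> n + (k - j) + (j - 1)"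
  shows "Inv \<I> k (U - {e}) (ph, ys, n', C @ [act @ xs, ys @ [Real I] @ xs]) (cls(L := ph, Suc L := \<not> ph))"
proof -
  let ?C' = "C @ [act @ xs, ys @ [Real I] @ xs]" and ?cls = "cls(L := ph, Suc L := \<not> ph)"
  have ne: "act \<noteq> []" using tph by auto
  have ph: "ph = ph0" using ne by simp
  have j1: "1 \<le> j" using ne by (simp add: j_def Suc_le_eq)
  have jk: "j < k" using actlen by (simp add: j_def)
  have actV: "m < n" if "Virt m \<in> set act" for m
    using fresh[of m] that by force
  have occ': "occ ?C' x = (if x \<in> set (act @ xs) then {L} else {}) \<union> (if x \<in> set (ys @ [Real I] @ xs) then {Suc L} else {}) \<union> occ C x" for x
    by (rule occ_app2)
  have clsC: "?cls c = cls c" if "c \<in> occ C x" for c x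
    using occ_lt[OF that] by simp
  have gx: "goodx ph ys ?C' ?cls (rem (U - {e}) n' x) x" for x
  proof (cases "x = Real I")
    case True
    have ti: "t \<in> rem U n x" using tin True by simp
    have rr: "rem (U - {e}) n' x = rem (U - {e}) n x" using True by (simp add: rem_def)
    have r: "rem (U - {e}) n' x = rem U n x - {t}" using True rem'[of x] rr by simp
    have ny: "x \<notin> set ys" "x \<notin> set xs" using True by (auto simp: xs_def ys_def)
    show ?thesis
    proof (cases "x \<in> set act")
      case True
      have o: "occ ?C' x = {L, Suc L} \<union> occ C x" using True ny occ'[of x] \<open>x = Real I\<close> by auto
      show ?thesis
      proof (rule goodx_in_cases[OF good True])
        assume a: "occ C x = {}" "rem U n x = {\<not>ph}"
        show ?thesis
          by (rule goodx_I_out2[OF ny(1), where ca=L and cb="Suc L"]) (use a o r ti in auto)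
      next
        fix c assume "rem U n x = {}" with ti show ?thesis by simp
      qed
    next
      case False
      have o: "occ ?C' x = {Suc L} \<union> occ C x" using False ny occ'[of x] \<open>x = Real I\<close> by auto
      show ?thesis
      proof (rule goodx_out_cases[OF good False])
        assume a: "occ C x = {}" "rem U n x = UNIV"
        show ?thesis
          by (rule goodx_I_out1[OF ny(1), where c="Suc L"]) (use a o r tph in \<open>auto simp: bool_UNIV_minus\<close>)
      next
        fix c assume a: "occ C x = {c}" "rem U n x = {\<not> cls c}"
        have "c < L" using a occ_lt by blast
        have cc: "cls c = (\<not> t)" using a ti by simp
        show ?thesis
          by (rule goodx_I_out2[OF ny(1), where ca=c and cb="Suc L"])
            (use a o r tph ti cc \<open>c < L\<close> in \<open>auto simp: insert_commute\<close>)
      next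
        fix c1 c2 assume "rem U n x = {}" with ti show ?thesis by simp
      next
        assume "rem U n x = {}" "occ C x = {}" with ti show ?thesis by simp
      qed
    qed
  next
    case False
    note F = False
    show ?thesis
    proof (cases "x \<in> set act")
      case True
      have nv: "x \<notin> set xs \<and> x \<notin> set ys"
        using True actV by (auto simp: xs_def ys_def dest!: actV)
      have r: "rem (U - {e}) n' x = rem U n x"
      proof (cases x)
        case (Real J)
        have rr: "rem (U - {e}) n' x = rem (U - {e}) n x" using Real by (simp add: rem_def)
        then show ?thesis using F rem'[of x] by simp
      next
        case (Virt m)
        have "m < n" using actV True Virt by simp
        then show ?thesis using Virt by (simp add: rem_def n'_def)
      qed
      have o: "occ ?C' x = insert L (occ C x)" using True nv F occ'[of x] by auto
      show ?thesis
      proof (rule goodx_in_cases[OF good True])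
        assume a: "occ C x = {}" "rem U n x = {\<not>ph}"
        show ?thesis
          by (rule goodx_I_out1[where c=L]) (use a o r nv in simp_all)
      next
        fix c assume a: "occ C x = {c}" "cls c \<noteq> ph" "rem U n x = {}"
        have "c < L" using a occ_lt by blast
        show ?thesis
          by (rule goodx_I_out2[where ca=c and cb=L]) (use a o r nv \<open>c < L\<close> in \<open>simp_all add: insert_commute\<close>)
      qed
    next
      case False
      note FA = False
      show ?thesis
      proof (cases "x \<in> set xs")
        case True
        then obtain m where m: "x = Virt m" "n \<le> m" "m < n + (k - j)" by (auto simp: xs_def)
        have o0: "occ C x = {}" using fresh[of m] m by simp
        have ny: "x \<notin> set ys" using m by (auto simp: ys_def)
        have o: "occ ?C' x = {L, Suc L}" using True o0 occ'[of x] by auto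
        have r: "rem (U - {e}) n' x = {}" using m by (simp add: rem_def n'_def)
        show ?thesis by (rule goodx_I_out2[OF ny o]) (use r in auto)
      next
        case False
        note FX = False
        show ?thesis
        proof (cases "x \<in> set ys")
          case True
          then obtain m where m: "x = Virt m" "n + (k - j) \<le> m" "m < n'" by (auto simp: ys_def n'_def)
          have o0: "occ C x = {}" using fresh[of m] m by simp
          have o: "occ ?C' x = {Suc L}" using True o0 occ'[of x] FA FX by auto
          have r: "rem (U - {e}) n' x = {}" using m by (simp add: rem_def)
          show ?thesis by (rule goodx_I_in1[OF True o]) (use r in auto)
        next
          case False
          have o: "occ ?C' x = occ C x" using False FA FX F occ'[of x] by auto
          have r: "rem (U - {e}) n' x = rem U n x"
          proof (cases x)
            case (Real J)
            have rr: "rem (U - {e}) n' x = rem (U - {e}) n x" using Real by (simp add: rem_def)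
            then show ?thesis using F rem'[of x] by simp
          next
            case (Virt m)
            have "\<not> (n \<le> m \<and> m < n')"
            proof
              assume mm: "n \<le> m \<and> m < n'"
              show False
              proof (cases "m < n + (k - j)")
                case True then show False using FX Virt mm by (auto simp: xs_def)
              next
                case False then show False using \<open>x \<notin> set ys\<close> Virt mm by (auto simp: ys_def n'_def)
              qed
            qed
            moreover have "n \<le> n'" by (simp add: n'_def)
            ultimately show ?thesis using Virt by (auto simp: rem_def)
          qed
          show ?thesis unfolding r
            by (rule goodx_out[OF good FA False o]) (auto dest: occ_lt)
        qed
      qed
    qed
  qed
  have d1: "distinct (act @ xs)"
    using actdist actV by (auto simp: xs_def distinct_map inj_on_def dest!: actV)
  have d2: "distinct (ys @ [Real I] @ xs)"
    by (auto simp: xs_def ys_def distinct_map inj_on_def)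
  have l1: "length (act @ xs) = k" using jk by (simp add: xs_def j_def)
  have l2: "length (ys @ [Real I] @ xs) = k" using jk j1 by (simp add: xs_def ys_def)
  have c': "\<forall>c<length ?C'. length (?C'!c) = k \<and> distinct (?C'!c)"
    using clen l1 l2 d1 d2 by (auto simp: nth_append less_Suc_eq)
  have ly: "length ys < k" using jk by (simp add: ys_def)
  have dy: "distinct ys" by (simp add: ys_def distinct_map inj_on_def)
  have n': "\<forall>J. J \<notin> \<I> \<longrightarrow> Real J \<notin> set ys \<and> occ ?C' (Real J) = {}"
    using notI Iin by (auto simp: occ_app2 xs_def ys_def)
  show ?thesis unfolding Inv_def
    using Usub c' ly dy n' gx by auto
qed

lemma step: "\<exists>cls'. Inv \<I> k (U - {e}) (cstep k (ph0, act, n, C) e) cls'"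
proof (cases "t = ph")
  case True
  show ?thesis
  proof (cases "length act + 1 = k")
    case True
    with A1[OF \<open>t = ph\<close> True] \<open>t = ph\<close> show ?thesis
      by (auto simp: cstep_def Let_def)
  next
    case False
    with A2[OF \<open>t = ph\<close> False] \<open>t = ph\<close> show ?thesis
      by (auto simp: cstep_def Let_def)
  qed
next
  case False
  have ne: "act \<noteq> []" using False by auto
  have eq: "cstep k (ph0, act, n, C) e = (ph, map Virt [n + (k - length act) ..< n + (k - length act) + (length act - 1)],
      n + (k - length act) + (length act - 1),
      C @ [act @ map Virt [n ..< n + (k - length act)],
           map Virt [n + (k - length act) ..< n + (k - length act) + (length act - 1)] @ [Real I] @ map Virt [n ..< n + (k - length act)]])"
    using False ne unfolding cstep_def Let_def by simp
  show ?thesis unfolding eq by (rule exI, rule B[OF False])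
qed

end

lemma fold_inv:
  "distinct es \<Longrightarrow> Inv \<I> k (set es \<union> V) st cls \<Longrightarrow> V \<inter> set es = {} \<Longrightarrow>
     \<exists>cls'. Inv \<I> k V (fold (\<lambda>e st. cstep k st e) es st) cls'"
proof (induction es arbitrary: st cls)
  case Nil then show ?case by auto
next
  case (Cons e es)
  obtain ph0 act n C where st: "st = (ph0, act, n, C)" by (cases st) auto
  have "e \<in> set (e # es) \<union> V" by simp
  from stepc.step[OF stepc.intro[OF Cons.prems(2)[unfolded st] this]]
  obtain cls' where c: "Inv \<I> k (set (e # es) \<union> V - {e}) (cstep k st e) cls'" using st by auto
  have eq: "set (e # es) \<union> V - {e} = set es \<union> V" using Cons.prems(1,3) by auto
  show ?case using Cons.IH[of "cstep k st e" cls'] c eq Cons.prems by auto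
qed



lemma final_props:
  assumes "Inv \<I> k {} (ph, act, n, C) cls"
  shows "\<forall>x. card (occ C x) \<le> 2 \<and> (card (occ C x) = 2 \<longrightarrow> (\<exists>c1 c2. occ C x = {c1, c2} \<and> cls c1 \<noteq> cls c2))
            \<and> (occ C x \<noteq> {} \<longrightarrow> x \<in> Real ` \<I> \<union> Virt ` {..<n})"
proof
  fix x
  have g: "goodx ph act C cls (rem {} n x) x" using assms by (simp add: Inv_def)
  have nI: "\<forall>J. J \<notin> \<I> \<longrightarrow> occ C (Real J) = {}" using assms by (simp add: Inv_def)
  have A: "card (occ C x) \<le> 2 \<and> (card (occ C x) = 2 \<longrightarrow> (\<exists>c1 c2. occ C x = {c1, c2} \<and> cls c1 \<noteq> cls c2))"
  proof (cases "x \<in> set act")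
    case True
    show ?thesis by (rule goodx_in_cases[OF g True]) auto
  next
    case False
    show ?thesis
    proof (rule goodx_out_cases[OF g False])
      fix c1 c2 assume a: "occ C x = {c1, c2}" "cls c1 \<noteq> cls c2"
      then have "c1 \<noteq> c2" by auto
      then show ?thesis using a by auto
    qed auto
  qed
  have B: "occ C x \<noteq> {} \<longrightarrow> x \<in> Real ` \<I> \<union> Virt ` {..<n}"
  proof
    assume ne: "occ C x \<noteq> {}"
    show "x \<in> Real ` \<I> \<union> Virt ` {..<n}"
    proof (cases x)
      case (Real J)
      have "J \<in> \<I>" using nI ne Real by blast
      then show ?thesis using Real by auto
    next
      case (Virt m)
      have "m < n"
      proof (rule ccontr)
        assume "\<not> m < n"
        then have r: "rem {} n x = UNIV" using Virt by (simp add: rem_def)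
        show False
        proof (cases "x \<in> set act")
          case True
          show False by (rule goodx_in_cases[OF g True]) (use r in auto)
        next
          case False
          show False by (rule goodx_out_cases[OF g False]) (use r ne in auto)
        qed
      qed
      then show ?thesis using Virt by auto
    qed
  qed
  show "card (occ C x) \<le> 2 \<and> (card (occ C x) = 2 \<longrightarrow> (\<exists>c1 c2. occ C x = {c1, c2} \<and> cls c1 \<noteq> cls c2))
            \<and> (occ C x \<noteq> {} \<longrightarrow> x \<in> Real ` \<I> \<union> Virt ` {..<n})" using A B by blast
qed

lemma construction_inv:
  assumes "valid_intervals \<I>" "k \<ge> 1"
  shows "\<exists>cls. Inv \<I> k {} (construction k \<I>) cls"
proof -
  have p: "distinct (sorted_events \<I>) \<and> set (sorted_events \<I>) = events \<I>"
    by (rule sorted_events_props[OF assms(1)])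
  have "Inv \<I> k (set (sorted_events \<I>) \<union> {}) (True, [], 0, []) undefined"
    using Inv_init[OF assms(2)] p by simp
  from fold_inv[OF conjunct1[OF p] this] show ?thesis
    unfolding construction_def by simp
qed

lemma distinct_map_neq: "distinct (map f l) \<Longrightarrow> x \<in> set l \<Longrightarrow> y \<in> set l \<Longrightarrow> x \<noteq> y \<Longrightarrow> f x \<noteq> f y"
  by (auto simp: distinct_map inj_on_def)


theorem lemma4:
  fixes \<I> :: "interval set" and k :: nat
  assumes "valid_intervals \<I>" and "k \<ge> 1"
  defines "X \<equiv> ground_set k \<I>" and "S \<equiv> constraints k \<I>"
  shows "(\<forall>x \<in> X. card (occ S x) \<le> 2)
       \<and> (\<exists>cls :: nat \<Rightarrow> bool. \<forall>x \<in> X. card (occ S x) = 2 \<longrightarrow>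
            (\<exists>c \<in> occ S x. cls c) \<and> (\<exists>c \<in> occ S x. \<not> cls c))
       \<and> mg_bipartite X S
       \<and> (\<forall>f. constraint_coloring k X S f \<longrightarrow> proper_edge_coloring k X S f)
       \<and> (\<forall>g. proper_edge_coloring k X S g \<longrightarrow>
            (\<exists>f. constraint_coloring k X S f \<and> (\<forall>x \<in> mg_edges X S. f x = g x)))"
proof -
  obtain cls where inv: "Inv \<I> k {} (construction k \<I>) cls" using construction_inv assms(1,2) by blast
  obtain ph act n C where cons: "construction k \<I> = (ph, act, n, C)" by (cases "construction k \<I>") auto
  have XX: "X = Real ` \<I> \<union> Virt ` {..<n}" by (simp add: X_def ground_set_def cons)
  have SS: "S = C" by (simp add: S_def constraints_def cons)
  have inv': "Inv \<I> k {} (ph, act, n, C) cls" using inv cons by simp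
  note fp = final_props[OF inv', folded XX]
  have clen: "\<forall>c<length C. length (C!c) = k \<and> distinct (C!c)" using inv' by (simp add: Inv_def)
  have ob: "c < length C" if "c \<in> occ C x" for c x using that occ_bound by blast
  have P1: "\<forall>x \<in> X. card (occ S x) \<le> 2" using fp SS by blast
  have P2: "\<forall>x \<in> X. card (occ S x) = 2 \<longrightarrow> (\<exists>c \<in> occ S x. cls c) \<and> (\<exists>c \<in> occ S x. \<not> cls c)"
  proof (intro ballI impI)
    fix x assume "x \<in> X" "card (occ S x) = 2"
    then obtain c1 c2 where "occ C x = {c1, c2}" "cls c1 \<noteq> cls c2" using fp SS by blast
    then show "(\<exists>c \<in> occ S x. cls c) \<and> (\<exists>c \<in> occ S x. \<not> cls c)" using SS by auto
  qed
  have P3: "mg_bipartite X S"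
    unfolding mg_bipartite_def
  proof (intro exI[of _ "{c. c < length S \<and> cls c}"] conjI ballI)
    show "{c. c < length S \<and> cls c} \<subseteq> {..<length S}" by auto
  next
    fix x assume "x \<in> mg_edges X S"
    then have "x \<in> X" "card (occ C x) = 2" by (auto simp: mg_edges_def SS)
    then obtain c1 c2 where o: "occ C x = {c1, c2}" "cls c1 \<noteq> cls c2" using fp by blast
    have b: "c1 < length C" "c2 < length C" using o ob by auto
    have "occ S x \<inter> {c. c < length S \<and> cls c} = (if cls c1 then {c1} else {c2})"
      using o b SS by auto
    then show "card (occ S x \<inter> {c. c < length S \<and> cls c}) = 1" by simp
  qed
  have P4: "\<forall>f. constraint_coloring k X S f \<longrightarrow> proper_edge_coloring k X S f"
  proof (intro allI impI)
    fix f assume cc: "constraint_coloring k X S f"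
    show "proper_edge_coloring k X S f"
      unfolding proper_edge_coloring_def
    proof (intro conjI ballI impI)
      fix x assume "x \<in> mg_edges X S"
      then show "f x \<in> {1..k}" using cc by (auto simp: mg_edges_def constraint_coloring_def)
    next
      fix x y assume xy: "x \<noteq> y \<and> occ S x \<inter> occ S y \<noteq> {}"
      then obtain c where c: "c < length S" "x \<in> set (S!c)" "y \<in> set (S!c)" by (auto simp: occ_def)
      have "distinct (map f (S!c))" using cc c(1) by (simp add: constraint_coloring_def)
      then show "f x \<noteq> f y" using distinct_map_neq c xy by metis
    qed
  qed
  have P5: "\<forall>g. proper_edge_coloring k X S g \<longrightarrow>
            (\<exists>f. constraint_coloring k X S f \<and> (\<forall>x \<in> mg_edges X S. f x = g x))"
  proof (intro allI impI)
    fix g assume pg: "proper_edge_coloring k X S g"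
    let ?E = "mg_edges X C"
    have gE: "\<forall>x\<in>?E. g x \<in> {1..k}" using pg SS by (simp add: proper_edge_coloring_def)
    have gP: "\<forall>x\<in>?E. \<forall>y\<in>?E. x \<noteq> y \<and> occ C x \<inter> occ C y \<noteq> {} \<longrightarrow> g x \<noteq> g y"
      using pg SS by (simp add: proper_edge_coloring_def)
    have ex: "\<forall>c. \<exists>h. c < length C \<longrightarrow> h ` (set (C!c) - ?E) \<subseteq> {1..k} - g ` (set (C!c) \<inter> ?E)
                 \<and> inj_on h (set (C!c) - ?E)"
    proof
      fix c
      show "\<exists>h. c < length C \<longrightarrow> h ` (set (C!c) - ?E) \<subseteq> {1..k} - g ` (set (C!c) \<inter> ?E)
                 \<and> inj_on h (set (C!c) - ?E)"
      proof (cases "c < length C")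
        case False then show ?thesis by blast
      next
        case True
        let ?Ec = "set (C!c) \<inter> ?E" and ?Nc = "set (C!c) - ?E"
        have inj: "inj_on g ?Ec"
        proof (rule inj_onI)
          fix x y assume "x \<in> ?Ec" "y \<in> ?Ec" "g x = g y"
          moreover have "c \<in> occ C x \<inter> occ C y" using True \<open>x \<in> ?Ec\<close> \<open>y \<in> ?Ec\<close> by (auto simp: occ_def)
          ultimately show "x = y" using gP by blast
        qed
        have ck: "card (set (C!c)) = k" using clen True distinct_card by metis
        have "card ?Ec + card ?Nc = k"
          using ck card_Int_Diff[of "set (C!c)" ?E] by simp
        moreover have "card (g ` ?Ec) = card ?Ec" using inj card_image by blast
        moreover have "g ` ?Ec \<subseteq> {1..k}" using gE by auto
        ultimately have "card ?Nc \<le> card ({1..k} - g ` ?Ec)"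
          by (simp add: card_Diff_subset)
        from card_le_inj[OF _ _ this] show ?thesis by auto
      qed
    qed
    from choice[OF ex] obtain H where H: "\<And>c. c < length C \<Longrightarrow> H c ` (set (C!c) - ?E) \<subseteq> {1..k} - g ` (set (C!c) \<inter> ?E)
                 \<and> inj_on (H c) (set (C!c) - ?E)" by blast
    define f where "f x = (if x \<in> ?E then g x else if occ C x \<noteq> {} then H (SOME c. c \<in> occ C x) x else 1)" for x
    have single: "occ C x = {c}" if "x \<notin> ?E" "c \<in> occ C x" for x c
    proof -
      have xX: "x \<in> X" using fp that(2) by blast
      have c2: "card (occ C x) \<noteq> 2" using that(1) xX by (simp add: mg_edges_def)
      have le: "card (occ C x) \<le> 2" using fp by blast
      have fin: "finite (occ C x)" using occ_bound finite_subset by blast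
      have "card (occ C x) \<noteq> 0" using fin that(2) by auto
      then have "card (occ C x) = 1" using c2 le by linarith
      then obtain d where "occ C x = {d}" using card_1_singletonE by blast
      then show ?thesis using that(2) by simp
    qed
    have fN: "f x = H c x" if "x \<notin> ?E" "c \<in> occ C x" for x c
      using single[OF that] that by (simp add: f_def)
    have cc: "constraint_coloring k X S f"
      unfolding constraint_coloring_def SS
    proof (intro conjI ballI allI impI)
      fix x assume "x \<in> X"
      show "f x \<in> {1..k}"
      proof (cases "x \<in> ?E")
        case True then show ?thesis using gE by (simp add: f_def)
      next
        case False
        show ?thesis
        proof (cases "occ C x = {}")
          case True then show ?thesis using False assms(2) by (simp add: f_def)
        next
          case ne: False
          then obtain c where c: "c \<in> occ C x" by blast
          have "c < length C" "x \<in> set (C!c)" using c by (auto simp: occ_def)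
          then show ?thesis using fN[OF False c] H[of c] False by auto
        qed
      qed
    next
      fix c assume c: "c < length C"
      have d: "distinct (C!c)" using clen c by blast
      have "inj_on f (set (C!c))"
      proof (rule inj_onI)
        fix x y assume x: "x \<in> set (C!c)" and y: "y \<in> set (C!c)" and fxy: "f x = f y"
        have cx: "c \<in> occ C x" "c \<in> occ C y" using c x y by (auto simp: occ_def)
        show "x = y"
        proof (cases "x \<in> ?E"; cases "y \<in> ?E")
          assume "x \<in> ?E" "y \<in> ?E"
          then show ?thesis using gP cx fxy by (auto simp: f_def)
        next
          assume a: "x \<in> ?E" "y \<notin> ?E"
          have "f y \<notin> g ` (set (C!c) \<inter> ?E)" using fN[OF a(2) cx(2)] H[OF c] y a(2) by auto
          moreover have "f x \<in> g ` (set (C!c) \<inter> ?E)" using a x by (simp add: f_def)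
          ultimately show ?thesis using fxy by simp
        next
          assume a: "x \<notin> ?E" "y \<in> ?E"
          have "f x \<notin> g ` (set (C!c) \<inter> ?E)" using fN[OF a(1) cx(1)] H[OF c] x a(1) by auto
          moreover have "f y \<in> g ` (set (C!c) \<inter> ?E)" using a y by (simp add: f_def)
          ultimately show ?thesis using fxy by simp
        next
          assume a: "x \<notin> ?E" "y \<notin> ?E"
          have "H c x = H c y" using fxy fN[OF a(1) cx(1)] fN[OF a(2) cx(2)] by simp
          then show ?thesis using H[OF c] a x y by (auto dest: inj_onD)
        qed
      qed
      then show "distinct (map f (C!c))" using d by (simp add: distinct_map)
    qed
    moreover have "\<forall>x \<in> mg_edges X S. f x = g x" using SS by (simp add: f_def)
    ultimately show "\<exists>f. constraint_coloring k X S f \<and> (\<forall>x \<in> mg_edges X S. f x = g x)" by blast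
  qed
  show ?thesis using P1 P2 P3 P4 P5 by blast
qed


end
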